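(* Let $(M,d)$ be a complete metric space and $X\subseteq M$ compact. Assume that every $\mu\in P(X)$ admits a barycenter in $M$, that $conv(X)$ is compact, and that at least one variance maximizing $\mu\in P(X)$ has a unique barycenter. Let $R$ be the circumradius of $X$ and $y$ its circumcenter. Then $\max_{\mu\in P(X)}Var(\mu)=R^2$, and every variance maximizing $\mu$ gives full measure to $\partial B(y,R)=\{x\in M: d(x,y)=R\}$.
   Context: $P(\cdot)$ denotes Borel probability measures. $Var(\mu)=\inf_{y\in M}\int_X d^2(x,y)\,d\mu(x)$, a barycenter of $\mu$ is a point of $M$ attaining this infimum, and a variance maximizing measure is a maximizer of $Var$ over $P(X)$. $conv(X)$ is the set of all barycenters of measures in $P(X)$. The circumradius of $X$ is $R=\inf_{z\in M}\sup_{x\in X}d(x,z)$, and a circumcenter is a point $y\in M$ with $X\subseteq\bar B(y,R)$; under these hypotheses the circumcenter exists and is unique. *)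

theory Defs
  imports "HOL-Probability.Probability"
begin

text \<open>The complete metric space M is the whole type 'a (class complete_space).
  Borel probability measures on X are represented as Borel probability measures
  on M that are concentrated on X.\<close>

definition Pm :: "'a::metric_space set \<Rightarrow> 'a measure set" where
  "Pm X = {\<mu>. prob_space \<mu> \<and> sets \<mu> = sets (borel :: 'a measure) \<and> emeasure \<mu> X = 1}"

definition Var :: "'a::metric_space measure \<Rightarrow> real" where
  "Var \<mu> = (INF y. (\<integral>x. (dist x y)\<^sup>2 \<partial>\<mu>))"

definition barycenter :: "'a::metric_space measure \<Rightarrow> 'a \<Rightarrow> bool" where
  "barycenter \<mu> y \<longleftrightarrow> (\<integral>x. (dist x y)\<^sup>2 \<partial>\<mu>) = Var \<mu>"

definition var_max :: "'a::metric_space set \<Rightarrow> 'a measure \<Rightarrow> bool" where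
  "var_max X \<mu> \<longleftrightarrow> \<mu> \<in> Pm X \<and> (\<forall>\<nu>\<in>Pm X. Var \<nu> \<le> Var \<mu>)"

definition conv :: "'a::metric_space set \<Rightarrow> 'a set" where
  "conv X = {y. \<exists>\<mu>\<in>Pm X. barycenter \<mu> y}"

definition circumradius :: "'a::metric_space set \<Rightarrow> real" where
  "circumradius X = (INF z. SUP x\<in>X. dist x z)"

end

theory Submission
  imports Defs
begin

lemma bern_nn:
  assumes "0 \<le> t" "t \<le> 1"
  shows "(\<integral>\<^sup>+b. g b \<partial>measure_pmf (bernoulli_pmf t)) = ennreal t * g True + ennreal (1-t) * g False"
  using assms by (simp add: nn_integral_measure_pmf nn_integral_count_space_finite UNIV_bool)

definition mix :: "real \<Rightarrow> 'a::metric_space \<Rightarrow> 'a measure \<Rightarrow> 'a measure" where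
  "mix t x \<mu> = measure_pmf (bernoulli_pmf t) \<bind> (\<lambda>b. if b then return borel x else \<mu>)"

lemma mix_meas:
  assumes "\<mu> \<in> Pm X"
  shows "(\<lambda>b. if b then return borel x else \<mu>) \<in> measurable (measure_pmf (bernoulli_pmf t)) (subprob_algebra borel)"
  using assms by (auto simp: Pm_def space_subprob_algebra subprob_space_return prob_space_imp_subprob_space)

lemma mix_sets: assumes "\<mu> \<in> Pm X" shows "sets (mix t x \<mu>) = sets borel"
  unfolding mix_def
  by (rule sets_bind[where N=borel]) (use assms in \<open>auto simp: Pm_def\<close>)

lemma mix_emeasure:
  assumes "\<mu> \<in> Pm X" "0 \<le> t" "t \<le> 1" "A \<in> sets borel"
  shows "emeasure (mix t x \<mu>) A = ennreal t * indicator A x + ennreal (1-t) * emeasure \<mu> A"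
  unfolding mix_def
  apply (subst emeasure_bind[OF _ mix_meas[OF assms(1)]])
  using assms by (auto simp: bern_nn Pm_def mult.commute)

lemma mix_nn:
  assumes "\<mu> \<in> Pm X" "0 \<le> t" "t \<le> 1" "f \<in> borel_measurable borel"
  shows "(\<integral>\<^sup>+w. f w \<partial>mix t x \<mu>) = ennreal t * f x + ennreal (1-t) * (\<integral>\<^sup>+w. f w \<partial>\<mu>)"
  unfolding mix_def
  apply (subst nn_integral_bind[OF assms(4) mix_meas[OF assms(1)]])
  using assms by (auto simp: bern_nn Pm_def nn_integral_return mult.commute cong: nn_integral_cong_simp)

lemma ennreal_t1: "0 \<le> t \<Longrightarrow> t \<le> 1 \<Longrightarrow> ennreal t + ennreal (1-t) = 1"
  by (subst ennreal_plus[symmetric]) auto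

lemma mix_Pm:
  assumes "\<mu> \<in> Pm X" "0 \<le> t" "t \<le> 1" "x \<in> X" "X \<in> sets borel"
  shows "mix t x \<mu> \<in> Pm X"
proof -
  have s: "space (mix t x \<mu>) = UNIV" using sets_eq_imp_space_eq[OF mix_sets[OF assms(1)]] by simp
  have sp: "space \<mu> = UNIV" using assms(1) sets_eq_imp_space_eq[of \<mu> borel] by (simp add: Pm_def)
  have u: "emeasure \<mu> UNIV = 1" using assms(1) prob_space.emeasure_space_1[of \<mu>] sp by (simp add: Pm_def)
  have "emeasure (mix t x \<mu>) UNIV = 1"
    using mix_emeasure[OF assms(1-3), of UNIV] u ennreal_t1[OF assms(2,3)] by simp
  moreover have "emeasure (mix t x \<mu>) X = 1"
    using mix_emeasure[OF assms(1-3) assms(5)] assms(1,4) ennreal_t1[OF assms(2,3)]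
    by (simp add: Pm_def)
  ultimately show ?thesis using s mix_sets[OF assms(1)]
    by (auto simp: Pm_def intro!: prob_spaceI)
qed


lemma Pm_facts:
  assumes "\<mu> \<in> Pm X" "compact X"
  shows "prob_space \<mu>" "space \<mu> = UNIV" "sets \<mu> = sets borel" "AE w in \<mu>. w \<in> X"
    "X \<in> sets borel"
proof -
  show P: "prob_space \<mu>" and S: "sets \<mu> = sets borel" using assms by (auto simp: Pm_def)
  show sp: "space \<mu> = UNIV" using S sets_eq_imp_space_eq[of \<mu> borel] by simp
  show Xb: "X \<in> sets borel" using assms(2) by (simp add: borel_closed compact_imp_closed)
  have "measure \<mu> X = 1" using assms(1) by (simp add: Pm_def measure_def)
  then show "AE w in \<mu>. w \<in> X"
    using prob_space.AE_in_set_eq_1[OF P, of X] Xb S by simp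
qed

lemma dist_meas[measurable]: "(\<lambda>w. dist w z) \<in> borel_measurable borel"
  by (intro borel_measurable_continuous_onI continuous_intros)

lemma dist2_meas: "(\<lambda>w. (dist w z)\<^sup>2) \<in> borel_measurable borel"
  by measurable

lemma Pm_integrable:
  assumes "\<mu> \<in> Pm X" "compact X"
  shows "integrable \<mu> (\<lambda>w. (dist w z)\<^sup>2)"
proof -
  interpret prob_space \<mu> using Pm_facts[OF assms] by simp
  obtain e where e: "\<forall>w\<in>X. dist z w \<le> e"
    using compact_imp_bounded[OF assms(2)] bounded_any_center by blast
  have "AE w in \<mu>. norm ((dist w z)\<^sup>2) \<le> e\<^sup>2"
    using Pm_facts(4)[OF assms]
  proof eventually_elim
    case (elim w) then show ?case using e by (simp add: dist_commute power_mono)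
  qed
  moreover have "(\<lambda>w. (dist w z)\<^sup>2) \<in> borel_measurable \<mu>"
    using dist2_meas measurable_cong_sets[OF Pm_facts(3)[OF assms] refl] by blast
  ultimately show ?thesis by (rule integrable_const_bound)
qed

lemma Var_le: "Var \<mu> \<le> (\<integral>w. (dist w z)\<^sup>2 \<partial>\<mu>)"
  unfolding Var_def
  by (rule cINF_lower) (auto intro!: bdd_belowI[where m=0])

lemma Var_nonneg: "0 \<le> Var \<mu>"
  unfolding Var_def by (rule cINF_greatest) auto

lemma mix_int:
  assumes "\<mu> \<in> Pm X" "compact X" "x \<in> X" "0 \<le> t" "t \<le> 1"
  shows "(\<integral>w. (dist w z)\<^sup>2 \<partial>mix t x \<mu>) = t * (dist x z)\<^sup>2 + (1-t) * (\<integral>w. (dist w z)\<^sup>2 \<partial>\<mu>)"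
proof -
  have Xb: "X \<in> sets borel" using Pm_facts[OF assms(1,2)] by simp
  have m: "(\<lambda>w. (dist w z)\<^sup>2) \<in> borel_measurable (mix t x \<mu>)"
    using dist2_meas measurable_cong_sets[OF mix_sets[OF assms(1)] refl] by blast
  have m2: "(\<lambda>w. ennreal ((dist w z)\<^sup>2)) \<in> borel_measurable borel" by measurable
  have "(\<integral>\<^sup>+w. ennreal ((dist w z)\<^sup>2) \<partial>\<mu>) = ennreal (\<integral>w. (dist w z)\<^sup>2 \<partial>\<mu>)"
    by (rule nn_integral_eq_integral[OF Pm_integrable[OF assms(1,2)]]) auto
  then have "(\<integral>\<^sup>+w. ennreal ((dist w z)\<^sup>2) \<partial>mix t x \<mu>) =
      ennreal (t * (dist x z)\<^sup>2 + (1-t) * (\<integral>w. (dist w z)\<^sup>2 \<partial>\<mu>))"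
    using mix_nn[OF assms(1,4,5) m2, of x] assms(4,5)
    by (simp add: ennreal_mult'[symmetric] ennreal_plus[symmetric] del: ennreal_plus)
  moreover have "0 \<le> t * (dist x z)\<^sup>2 + (1-t) * (\<integral>w. (dist w z)\<^sup>2 \<partial>\<mu>)"
    using assms(4,5) by (intro add_nonneg_nonneg mult_nonneg_nonneg) auto
  ultimately show ?thesis
    by (simp add: integral_eq_nn_integral[OF m])
qed


lemma key_step:
  fixes X :: "'a::metric_space set"
  assumes cX: "compact X"
    and bar: "\<forall>\<mu>\<in>Pm X. \<exists>b. barycenter \<mu> b"
    and cc: "compact (conv X)"
    and vm: "var_max X \<mu>" and bb: "barycenter \<mu> b" and uq: "\<And>b'. barycenter \<mu> b' \<Longrightarrow> b' = b"
    and xX: "x \<in> X"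
  shows "(dist x b)\<^sup>2 \<le> Var \<mu>"
proof -
  define V where "V = Var \<mu>"
  define I where "I = (\<lambda>z. \<integral>w. (dist w z)\<^sup>2 \<partial>\<mu>)"
  have PmX: "\<mu> \<in> Pm X" using vm by (simp add: var_max_def)
  interpret P: prob_space \<mu> using Pm_facts[OF PmX cX] by simp
  have Xb: "X \<in> sets borel" using Pm_facts[OF PmX cX] by simp
  have V0: "0 \<le> V" unfolding V_def by (rule Var_nonneg)
  define t where "t = (\<lambda>n::nat. inverse (real (Suc (Suc n))))"
  have t0: "0 < t n" "t n \<le> 1" for n unfolding t_def by (auto simp: field_simps)
  have nuP: "mix (t n) x \<mu> \<in> Pm X" for n
    using mix_Pm[OF PmX less_imp_le[OF t0(1)] t0(2) xX Xb] .
  have "\<forall>n. \<exists>b. barycenter (mix (t n) x \<mu>) b" using bar nuP by blast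
  then obtain z where z0: "\<forall>n. barycenter (mix (t n) x \<mu>) (z n)" by metis
  have z: "\<And>n. barycenter (mix (t n) x \<mu>) (z n)" using z0 by blast
  have zc: "z n \<in> conv X" for n using z nuP unfolding conv_def by blast
  have bnd: "(dist x (z n))\<^sup>2 \<le> V \<and> I (z n) \<le> V + V * inverse (real (Suc n))" for n
  proof -
    have "Var (mix (t n) x \<mu>) \<le> V" using vm nuP by (simp add: var_max_def V_def)
    moreover have "Var (mix (t n) x \<mu>) = t n * (dist x (z n))\<^sup>2 + (1 - t n) * I (z n)"
      using z[of n] mix_int[OF PmX cX xX less_imp_le[OF t0(1)] t0(2)]
      by (simp add: barycenter_def I_def)
    moreover have "V \<le> I (z n)" unfolding V_def I_def by (rule Var_le)
    ultimately have A: "t n * (dist x (z n))\<^sup>2 + (1 - t n) * I (z n) \<le> V" and B: "V \<le> I (z n)" by auto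
    have "t n * (dist x (z n))\<^sup>2 \<le> t n * V"
    proof -
      have "(1 - t n) * V \<le> (1 - t n) * I (z n)" using B t0[of n] by (intro mult_left_mono) auto
      then show ?thesis using A by (simp add: algebra_simps)
    qed
    then have C: "(dist x (z n))\<^sup>2 \<le> V" using t0(1)[of n] by simp
    have "(1 - t n) * I (z n) \<le> V" using A t0[of n] by (smt (verit) mult_nonneg_nonneg zero_le_power2)
    moreover have "1 - t n = real (Suc n) / real (Suc (Suc n))" unfolding t_def by (simp add: field_simps)
    ultimately have "real (Suc n) * I (z n) \<le> real (Suc (Suc n)) * V"
      by (simp add: field_simps)
    then have "I (z n) \<le> (real (Suc (Suc n)) * V) / real (Suc n)"
      by (simp add: field_simps)
    also have "\<dots> = V + V * inverse (real (Suc n))" by (simp add: field_simps)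
    finally show ?thesis using C by simp
  qed
  obtain l r where l: "l \<in> conv X" "strict_mono r" "(z \<circ> r) \<longlonglongrightarrow> l"
    using seq_compactE[OF compact_imp_seq_compact[OF cc]] zc by metis
  obtain e where e: "\<forall>w\<in>X \<union> conv X. dist x w \<le> e"
    using compact_imp_bounded[OF compact_Un[OF cX cc]] bounded_any_center by blast
  define D where "D = 2 * e"
  have D: "dist w (z m) \<le> D" if "w \<in> X" for w m
  proof -
    have "dist w (z m) \<le> dist x w + dist x (z m)" by (metis dist_commute dist_triangle)
    moreover have "dist x w \<le> e" "dist x (z m) \<le> e" using e that zc[of m] by auto
    ultimately show ?thesis by (simp add: D_def)
  qed
  have D0: "0 \<le> D" using D[OF xX, of 0] by (meson zero_le_dist order_trans)
  define ee where "ee = (\<lambda>n. dist (z (r n)) l)"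
  have ee0: "ee \<longlonglongrightarrow> 0"
  proof -
    have "(\<lambda>n. dist ((z \<circ> r) n) l) \<longlonglongrightarrow> dist l l"
      by (intro tendsto_intros l(3))
    then show ?thesis by (simp add: ee_def comp_def)
  qed
  have Il: "I l \<le> V + V * inverse (real (Suc n)) + 2 * D * ee n + (ee n)\<^sup>2" for n
  proof -
    have "I l \<le> (\<integral>w. (dist w (z (r n)))\<^sup>2 + (2 * D * ee n + (ee n)\<^sup>2) \<partial>\<mu>)"
      unfolding I_def
    proof (rule integral_mono_AE)
      show "integrable \<mu> (\<lambda>w. (dist w l)\<^sup>2)" by (rule Pm_integrable[OF PmX cX])
      show "integrable \<mu> (\<lambda>w. (dist w (z (r n)))\<^sup>2 + (2 * D * ee n + (ee n)\<^sup>2))"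
        by (intro Bochner_Integration.integrable_add Pm_integrable[OF PmX cX] P.integrable_const)
      show "AE w in \<mu>. (dist w l)\<^sup>2 \<le> (dist w (z (r n)))\<^sup>2 + (2 * D * ee n + (ee n)\<^sup>2)"
        using Pm_facts(4)[OF PmX cX]
      proof eventually_elim
        case (elim w)
        have "dist w l \<le> dist w (z (r n)) + ee n" unfolding ee_def by (rule dist_triangle)
        then have "(dist w l)\<^sup>2 \<le> (dist w (z (r n)) + ee n)\<^sup>2" by (intro power_mono) auto
        also have "\<dots> = (dist w (z (r n)))\<^sup>2 + 2 * dist w (z (r n)) * ee n + (ee n)\<^sup>2"
          by (simp add: power2_eq_square algebra_simps)
        also have "\<dots> \<le> (dist w (z (r n)))\<^sup>2 + 2 * D * ee n + (ee n)\<^sup>2"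
          using D[OF elim, of "r n"] by (simp add: ee_def mult_right_mono)
        finally show ?case by simp
      qed
    qed
    also have "\<dots> = I (z (r n)) + (2 * D * ee n + (ee n)\<^sup>2)"
      unfolding I_def
      by (subst Bochner_Integration.integral_add) (auto intro: Pm_integrable[OF PmX cX] simp: P.prob_space)
    also have "I (z (r n)) \<le> V + V * inverse (real (Suc n))"
    proof -
      have "I (z (r n)) \<le> V + V * inverse (real (Suc (r n)))" using bnd[of "r n"] by simp
      also have "\<dots> \<le> V + V * inverse (real (Suc n))"
        using seq_suble[OF l(2), of n] V0 by (auto intro!: mult_left_mono le_imp_inverse_le)
      finally show ?thesis .
    qed
    finally show ?thesis by simp
  qed
  have "I l \<le> V"
  proof (rule LIMSEQ_le_const)
    have "(\<lambda>n. V + V * inverse (real (Suc n)) + 2 * D * ee n + (ee n)\<^sup>2) \<longlonglongrightarrow> V + V * 0 + 2 * D * 0 + 0\<^sup>2"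
      by (intro tendsto_intros ee0 LIMSEQ_inverse_real_of_nat)
    then show "(\<lambda>n. V + V * inverse (real (Suc n)) + 2 * D * ee n + (ee n)\<^sup>2) \<longlonglongrightarrow> V" by simp
  qed (use Il in auto)
  moreover have "V \<le> I l" unfolding V_def I_def by (rule Var_le)
  ultimately have "barycenter \<mu> l" unfolding barycenter_def V_def I_def by simp
  then have lb: "l = b" by (rule uq)
  have "(dist x l)\<^sup>2 \<le> V"
  proof (rule LIMSEQ_le_const2)
    show "(\<lambda>n. (dist x ((z \<circ> r) n))\<^sup>2) \<longlonglongrightarrow> (dist x l)\<^sup>2"
      by (intro tendsto_intros l(3))
  qed (use bnd in auto)
  then show ?thesis using lb V_def by simp
qed


lemma Var_le_R2:
  fixes X :: "'a::metric_space set"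
  assumes "\<nu> \<in> Pm X" "compact X" "X \<subseteq> cball y R"
  shows "Var \<nu> \<le> (\<integral>w. (dist w y)\<^sup>2 \<partial>\<nu>)" "(\<integral>w. (dist w y)\<^sup>2 \<partial>\<nu>) \<le> R\<^sup>2"
proof -
  interpret P: prob_space \<nu> using Pm_facts[OF assms(1,2)] by simp
  show "Var \<nu> \<le> (\<integral>w. (dist w y)\<^sup>2 \<partial>\<nu>)" by (rule Var_le)
  have "(\<integral>w. (dist w y)\<^sup>2 \<partial>\<nu>) \<le> (\<integral>w. R\<^sup>2 \<partial>\<nu>)"
  proof (rule integral_mono_AE)
    show "integrable \<nu> (\<lambda>w. (dist w y)\<^sup>2)" by (rule Pm_integrable[OF assms(1,2)])
    show "AE w in \<nu>. (dist w y)\<^sup>2 \<le> R\<^sup>2"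
      using Pm_facts(4)[OF assms(1,2)]
    proof eventually_elim
      case (elim w) then show ?case using assms(3) by (auto simp: dist_commute intro!: power_mono)
    qed
  qed auto
  then show "(\<integral>w. (dist w y)\<^sup>2 \<partial>\<nu>) \<le> R\<^sup>2" by (simp add: P.prob_space)
qed

theorem corollary3p4:
  fixes X :: "'a::complete_space set" and y :: 'a
  assumes "compact X"
    and "\<forall>\<mu>\<in>Pm X. \<exists>b. barycenter \<mu> b"
    and "compact (conv X)"
    and "\<exists>\<mu>. var_max X \<mu> \<and> (\<exists>!b. barycenter \<mu> b)"
    and "X \<subseteq> cball y (circumradius X)"
  shows "(\<exists>\<mu>. var_max X \<mu> \<and> Var \<mu> = (circumradius X)\<^sup>2)
    \<and> (\<forall>\<mu>. var_max X \<mu> \<longrightarrow> emeasure \<mu> {x. dist x y = circumradius X} = 1)"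
proof -
  define R where "R = circumradius X"
  obtain \<mu> b where vm: "var_max X \<mu>" and bb: "barycenter \<mu> b" and uq: "\<And>b'. barycenter \<mu> b' \<Longrightarrow> b' = b"
    using assms(4) by metis
  have PmX: "\<mu> \<in> Pm X" using vm by (simp add: var_max_def)
  have Xne: "X \<noteq> {}" using PmX by (auto simp: Pm_def)
  then obtain w0 where w0: "w0 \<in> X" by blast
  have R0: "0 \<le> R" using assms(5) w0 unfolding R_def by (meson mem_cball zero_le_dist order_trans subsetD)
  have V0: "0 \<le> Var \<mu>" by (rule Var_nonneg)
  have key: "\<forall>x\<in>X. dist x b \<le> sqrt (Var \<mu>)"
    using key_step[OF assms(1,2,3) vm bb uq] by (auto intro: real_le_rsqrt)
  have sup0: "bdd_above ((\<lambda>w. dist w z) ` X)" for z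
  proof -
    obtain e where "\<forall>w\<in>X. dist z w \<le> e"
      using compact_imp_bounded[OF assms(1)] bounded_any_center by blast
    then show ?thesis by (intro bdd_aboveI[where M=e]) (auto simp: dist_commute)
  qed
  have "R \<le> (SUP w\<in>X. dist w b)" unfolding R_def circumradius_def
  proof (rule cINF_lower)
    show "bdd_below ((\<lambda>z. SUP w\<in>X. dist w z) ` UNIV)"
    proof (rule bdd_belowI[where m=0], clarify)
      fix z
      have "dist w0 z \<le> (SUP w\<in>X. dist w z)" by (rule cSUP_upper[OF w0 sup0])
      then show "0 \<le> (SUP w\<in>X. dist w z)" using zero_le_dist order_trans by blast
    qed
  qed simp
  also have "\<dots> \<le> sqrt (Var \<mu>)" using key Xne by (intro cSUP_least) auto
  finally have "R\<^sup>2 \<le> Var \<mu>" using R0 V0 by (metis power_mono real_sqrt_pow2)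
  moreover have VR: "\<And>\<nu>. \<nu> \<in> Pm X \<Longrightarrow> Var \<nu> \<le> R\<^sup>2"
    using Var_le_R2[OF _ assms(1) assms(5)[folded R_def]] by (meson order_trans)
  ultimately have VeqR: "Var \<mu> = R\<^sup>2" using PmX by (meson antisym)
  have "emeasure \<nu> {x. dist x y = R} = 1" if vn: "var_max X \<nu>" for \<nu>
  proof -
    have Pn: "\<nu> \<in> Pm X" using vn by (simp add: var_max_def)
    interpret P: prob_space \<nu> using Pm_facts[OF Pn assms(1)] by simp
    have "Var \<mu> \<le> Var \<nu>" using vn PmX by (simp add: var_max_def)
    then have "(\<integral>w. (dist w y)\<^sup>2 \<partial>\<nu>) = R\<^sup>2"
      using Var_le_R2[OF Pn assms(1) assms(5)[folded R_def]] VeqR by linarith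
    then have "(\<integral>w. R\<^sup>2 - (dist w y)\<^sup>2 \<partial>\<nu>) = 0"
      by (subst Bochner_Integration.integral_diff) (auto intro: Pm_integrable[OF Pn assms(1)] simp: P.prob_space)
    moreover have AEX: "AE w in \<nu>. w \<in> X" by (rule Pm_facts(4)[OF Pn assms(1)])
    have AEn: "AE w in \<nu>. 0 \<le> R\<^sup>2 - (dist w y)\<^sup>2"
      using AEX
    proof eventually_elim
      case (elim w) then show ?case using assms(5)[folded R_def] by (auto simp: dist_commute intro!: power_mono)
    qed
    ultimately have "AE w in \<nu>. R\<^sup>2 - (dist w y)\<^sup>2 = 0"
      using integral_nonneg_eq_0_iff_AE[of \<nu> "\<lambda>w. R\<^sup>2 - (dist w y)\<^sup>2"]
        Bochner_Integration.integrable_diff[OF P.integrable_const Pm_integrable[OF Pn assms(1)]] AEn by auto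
    then have "AE w in \<nu>. w \<in> {x. dist x y = R} \<longleftrightarrow> w \<in> space \<nu>"
    proof eventually_elim
      case (elim w) then show ?case using R0 Pm_facts(2)[OF Pn assms(1)] by simp
    qed
    moreover have "{x. dist x y = R} \<in> sets \<nu>" using Pm_facts(3)[OF Pn assms(1)] by simp
    ultimately have "emeasure \<nu> {x. dist x y = R} = emeasure \<nu> (space \<nu>)"
      by (intro emeasure_eq_AE) auto
    then show ?thesis by (simp add: P.emeasure_space_1)
  qed
  then show ?thesis using vm VeqR unfolding R_def by blast
qed

end
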